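(* For every pair $N_1,N_2$ of phylogenetic networks over the same set $S$ of taxa, $$m(N_1,N_2)=\tfrac12|\Upsilon(N_1)\bigtriangleup\Upsilon(N_2)|.$$
   Context: A phylogenetic network on a finite set $S$ is a finite rooted directed acyclic graph whose leaves are bijectively labeled by $S$. Nodes $u,v$ (possibly in different networks) are equivalent, $u\equiv v$, if both are leaves with the same label, or for some $k\ge1$ both have exactly $k$ children which can be ordered $u_1,\dots,u_k$ and $v_1,\dots,v_k$ with $u_i\equiv v_i$ for all $i$. For a node $v$ of a network, $\kappa(v)$ is the number of nodes in that network equivalent to $v$. Nakhleh's measure: let $U(N_1),U(N_2)$ be maximal sets of pairwise non-equivalent nodes of $N_1,N_2$; for $v_1\in U(N_1)$, $\delta(v_1)=\kappa(v_1)$ if no node of $U(N_2)$ is equivalent to $v_1$, and $\delta(v_1)=\max\{0,\kappa(v_1)-\kappa(v_1')\}$ if $v_1'\in U(N_2)$ is equivalent to $v_1$; $\delta(v_2)$ for $v_2\in U(N_2)$ is defined symmetrically; and $m(N_1,N_2)=\frac12\big(\sum_{v_1\in U(N_1)}\delta(v_1)+\sum_{v_2\in U(N_2)}\delta(v_2)\big)$. The nested label $\ell(v)$ is defined by induction on height (largest length of a path to a leaf): $\ell(v)=\{i\}$ for the leaf labeled $i$, and otherwise $\ell(v)$ is the multiset of nested labels of the children of $v$. $\Upsilon(N)$ is the multiset of nested labels of all nodes of $N$ (multiplicity = number of nodes with that nested label); $\bigtriangleup$ is multiset symmetric difference (multiplicity $|M_1(x)-M_2(x)|$) and $|\cdot|$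 is the sum of multiplicities. *)

theory Defs
  imports Complex_Main "HOL-Library.Multiset"
begin

text \<open>A phylogenetic network: finite node set, arc relation, root, and a labelling
  of nodes (only its values on leaves matter).\<close>
record ('v, 'l) network =
  nodes :: "'v set"
  arcs  :: "('v \<times> 'v) set"
  root  :: 'v
  lbl   :: "'v \<Rightarrow> 'l"

definition children :: "('v, 'l) network \<Rightarrow> 'v \<Rightarrow> 'v set" where
  "children N u = {w. (u, w) \<in> arcs N}"

definition leaves :: "('v, 'l) network \<Rightarrow> 'v set" where
  "leaves N = {v \<in> nodes N. children N v = {}}"

definition phylo_net :: "'l set \<Rightarrow> ('v, 'l) network \<Rightarrow> bool" where
  "phylo_net S N \<longleftrightarrow>
     finite (nodes N) \<and>
     arcs N \<subseteq> nodes N \<times> nodes N \<and>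
     acyclic (arcs N) \<and>
     root N \<in> nodes N \<and>
     (\<forall>v \<in> nodes N. (root N, v) \<in> (arcs N)\<^sup>*) \<and>
     bij_betw (lbl N) (leaves N) S"

inductive node_equiv :: "('a, 'l) network \<Rightarrow> ('b, 'l) network \<Rightarrow> 'a \<Rightarrow> 'b \<Rightarrow> bool"
  for N1 N2 where
  leaf: "u \<in> leaves N1 \<Longrightarrow> v \<in> leaves N2 \<Longrightarrow> lbl N1 u = lbl N2 v \<Longrightarrow> node_equiv N1 N2 u v"
| inner: "u \<in> nodes N1 \<Longrightarrow> v \<in> nodes N2 \<Longrightarrow> children N1 u \<noteq> {} \<Longrightarrow>
          bij_betw f (children N1 u) (children N2 v) \<Longrightarrow>
          (\<forall>c \<in> children N1 u. node_equiv N1 N2 c (f c)) \<Longrightarrow> node_equiv N1 N2 u v"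

definition kappa :: "('v, 'l) network \<Rightarrow> 'v \<Rightarrow> nat" where
  "kappa N v = card {u \<in> nodes N. node_equiv N N u v}"

definition max_noneq_set :: "('v, 'l) network \<Rightarrow> 'v set \<Rightarrow> bool" where
  "max_noneq_set N U \<longleftrightarrow>
     U \<subseteq> nodes N \<and>
     (\<forall>u \<in> U. \<forall>w \<in> U. u \<noteq> w \<longrightarrow> \<not> node_equiv N N u w) \<and>
     (\<forall>x \<in> nodes N - U. \<exists>u \<in> U. node_equiv N N x u \<or> node_equiv N N u x)"

definition delta :: "('a, 'l) network \<Rightarrow> ('b, 'l) network \<Rightarrow> 'b set \<Rightarrow> 'a \<Rightarrow> nat" where
  "delta N1 N2 U2 v1 =
     (if \<exists>v2 \<in> U2. node_equiv N1 N2 v1 v2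
      then kappa N1 v1 - kappa N2 (SOME v2. v2 \<in> U2 \<and> node_equiv N1 N2 v1 v2)
      else kappa N1 v1)"

definition nakhleh :: "('a, 'l) network \<Rightarrow> ('b, 'l) network \<Rightarrow> 'a set \<Rightarrow> 'b set \<Rightarrow> real" where
  "nakhleh N1 N2 U1 U2 =
     (real (\<Sum>v1\<in>U1. delta N1 N2 U2 v1) + real (\<Sum>v2\<in>U2. delta N2 N1 U1 v2)) / 2"

datatype 'l nlabel = NLeaf 'l | NNode "'l nlabel multiset"

inductive has_nlabel :: "('v, 'l) network \<Rightarrow> 'v \<Rightarrow> 'l nlabel \<Rightarrow> bool" for N where
  leaf: "v \<in> leaves N \<Longrightarrow> has_nlabel N v (NLeaf (lbl N v))"
| inner: "v \<in> nodes N \<Longrightarrow> children N v \<noteq> {} \<Longrightarrow>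
          (\<forall>c \<in> children N v. has_nlabel N c (g c)) \<Longrightarrow>
          has_nlabel N v (NNode (image_mset g (mset_set (children N v))))"

definition nested_label :: "('v, 'l) network \<Rightarrow> 'v \<Rightarrow> 'l nlabel" where
  "nested_label N v = (THE L. has_nlabel N v L)"

definition Upsilon :: "('v, 'l) network \<Rightarrow> 'l nlabel multiset" where
  "Upsilon N = image_mset (nested_label N) (mset_set (nodes N))"

definition msym_diff :: "'a multiset \<Rightarrow> 'a multiset \<Rightarrow> 'a multiset" where
  "msym_diff M1 M2 = (M1 - M2) + (M2 - M1)"

end

theory Submission
  imports Defs
begin

definition good :: "('v, 'l) network \<Rightarrow> bool" where
  "good N \<longleftrightarrow> finite (nodes N) \<and> arcs N \<subseteq> nodes N \<times> nodes N \<and> acyclic (arcs N)"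

lemma phylo_good: "phylo_net S N \<Longrightarrow> good N"
  by (simp add: phylo_net_def good_def)

lemma children_sub: "good N \<Longrightarrow> children N v \<subseteq> nodes N"
  by (auto simp: good_def children_def)

lemma children_fin: "good N \<Longrightarrow> finite (children N v)"
  by (rule finite_subset[OF children_sub]) (simp_all add: good_def)

lemma good_wf: "good N \<Longrightarrow> wf ((arcs N)\<inverse>)"
proof -
  assume g: "good N"
  have "finite (arcs N)"
    by (rule finite_subset[of _ "nodes N \<times> nodes N"]) (use g in \<open>simp_all add: good_def\<close>)
  then show ?thesis using g by (simp add: good_def finite_acyclic_wf_converse)
qed

lemma has_nlabel_unique_aux:
  "has_nlabel N v L1 \<Longrightarrow> \<forall>L2. has_nlabel N v L2 \<longrightarrow> L1 = L2"
proof (induction rule: has_nlabel.induct)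
  case (leaf v)
  show ?case
  proof (intro allI impI)
    fix L2 assume "has_nlabel N v L2"
    then show "NLeaf (lbl N v) = L2"
    proof cases
      case leaf then show ?thesis by simp
    next
      case inner then show ?thesis using leaf by (simp add: leaves_def)
    qed
  qed
next
  case (inner v g)
  note IH = inner.IH
  show ?case
  proof (intro allI impI)
    fix L2 assume "has_nlabel N v L2"
    then show "NNode (image_mset g (mset_set (children N v))) = L2"
    proof cases
      case leaf then show ?thesis using inner.hyps(2) by (simp add: leaves_def)
    next
      case (inner g')
      have "image_mset g (mset_set (children N v)) = image_mset g' (mset_set (children N v))"
      proof (rule image_mset_cong)
        fix x assume "x \<in># mset_set (children N v)"
        then have x: "x \<in> children N v"
          by (metis elem_mset_set empty_iff mset_set.infinite set_mset_empty)
        have h: "has_nlabel N x (g' x)" using inner(4) x by simp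
        have "\<forall>L2. has_nlabel N x L2 \<longrightarrow> g x = L2" using IH x by simp
        then show "g x = g' x" using h by simp
      qed
      then show ?thesis using inner(1) by simp
    qed
  qed
qed

lemma has_nlabel_unique: "has_nlabel N v L1 \<Longrightarrow> has_nlabel N v L2 \<Longrightarrow> L1 = L2"
  using has_nlabel_unique_aux by metis

lemma has_nlabel_exists: assumes g: "good N" shows "v \<in> nodes N \<Longrightarrow> \<exists>L. has_nlabel N v L"
proof (induction v rule: wf_induct[OF good_wf[OF g]])
  case (1 v)
  note IH = 1(1) and vn = 1(2)
  show ?case
  proof (cases "children N v = {}")
    case True
    then have "v \<in> leaves N" using vn by (simp add: leaves_def)
    then have "has_nlabel N v (NLeaf (lbl N v))" by (rule has_nlabel.leaf)
    then show ?thesis ..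
  next
    case False
    have "\<forall>c\<in>children N v. \<exists>L. has_nlabel N c L"
    proof
      fix c assume c: "c \<in> children N v"
      then have r: "(c, v) \<in> (arcs N)\<inverse>" by (simp add: children_def)
      have cn: "c \<in> nodes N" using c children_sub[OF g] by (rule subsetD[rotated])
      show "\<exists>L. has_nlabel N c L" using IH r cn by simp
    qed
    then obtain g where "\<forall>c\<in>children N v. has_nlabel N c (g c)" by (rule bchoice[THEN exE])
    then have "has_nlabel N v (NNode (image_mset g (mset_set (children N v))))"
      by (rule has_nlabel.inner[OF vn False])
    then show ?thesis ..
  qed
qed

lemma has_nl: "good N \<Longrightarrow> v \<in> nodes N \<Longrightarrow> has_nlabel N v (nested_label N v)"
proof -
  assume a: "good N" "v \<in> nodes N"
  obtain L where L: "has_nlabel N v L" using has_nlabel_exists[OF a] by blast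
  have "\<exists>!L. has_nlabel N v L"
  proof (rule ex1I[of _ L])
    show "has_nlabel N v L" by (rule L)
    fix x assume "has_nlabel N v x"
    then show "x = L" using L by (rule has_nlabel_unique)
  qed
  then show ?thesis unfolding nested_label_def by (rule theI')
qed

lemma nl_leaf: "good N \<Longrightarrow> v \<in> leaves N \<Longrightarrow> nested_label N v = NLeaf (lbl N v)"
proof -
  assume a: "good N" "v \<in> leaves N"
  then have "v \<in> nodes N" by (simp add: leaves_def)
  then show ?thesis using has_nlabel_unique[OF has_nl[OF a(1)] has_nlabel.leaf[OF a(2)]] by simp
qed

lemma nl_inner: "good N \<Longrightarrow> v \<in> nodes N \<Longrightarrow> children N v \<noteq> {} \<Longrightarrow>
  nested_label N v = NNode (image_mset (nested_label N) (mset_set (children N v)))"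
proof -
  assume g: "good N" and v: "v \<in> nodes N" and c: "children N v \<noteq> {}"
  have "\<forall>x\<in>children N v. has_nlabel N x (nested_label N x)"
  proof
    fix x assume "x \<in> children N v"
    then have "x \<in> nodes N" using children_sub[OF g] by (rule subsetD[rotated])
    then show "has_nlabel N x (nested_label N x)" by (rule has_nl[OF g])
  qed
  then have "has_nlabel N v (NNode (image_mset (nested_label N) (mset_set (children N v))))"
    by (rule has_nlabel.inner[OF v c])
  then show ?thesis by (rule has_nlabel_unique[OF has_nl[OF g v]])
qed

lemma mset_match:
  assumes "finite A" "finite B" "image_mset g (mset_set A) = image_mset h (mset_set B)"
  shows "\<exists>f. bij_betw f A B \<and> (\<forall>a\<in>A. h (f a) = g a)"
  using assms
proof (induction A arbitrary: B rule: finite_induct)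
  case empty
  then have "mset_set B = {#}" by simp
  then have "B = {}" using empty.prems(1) by (simp add: mset_set_empty_iff)
  then show ?case by (auto simp: bij_betw_def)
next
  case (insert a A)
  have ins: "mset_set (insert a A) = add_mset a (mset_set A)"
    using insert.hyps by simp
  have "g a \<in># image_mset h (mset_set B)"
    using insert.prems(2) unfolding ins by (metis image_mset_add_mset union_single_eq_member)
  then obtain b where b: "b \<in> B" "h b = g a" using insert.prems(1) by auto
  have B: "mset_set B = add_mset b (mset_set (B - {b}))"
    using b(1) insert.prems(1) by (simp add: mset_set.remove)
  have "add_mset (g a) (image_mset g (mset_set A)) = add_mset (g a) (image_mset h (mset_set (B - {b})))"
    using insert.prems(2) unfolding ins B by (simp add: b(2))
  then have "image_mset g (mset_set A) = image_mset h (mset_set (B - {b}))" by simp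
  then obtain f where f: "bij_betw f A (B - {b})" "\<forall>x\<in>A. h (f x) = g x"
    using insert.IH[of "B - {b}"] insert.prems(1) by auto
  define f' where "f' = f(a := b)"
  have eqA: "\<And>x. x \<in> A \<Longrightarrow> f' x = f x" using insert.hyps(2) unfolding f'_def by auto
  have "bij_betw f' A (B - {b})"
    using bij_betw_cong[of A f' f "B - {b}"] eqA f(1) by simp
  moreover have "f' a = b" unfolding f'_def by simp
  ultimately have "bij_betw f' (A \<union> {a}) ((B - {b}) \<union> {b})"
    using notIn_Un_bij_betw3[of a A f' "B - {b}"] insert.hyps(2) by simp
  moreover have "A \<union> {a} = insert a A" by blast
  moreover have "(B - {b}) \<union> {b} = B" using b(1) by blast
  ultimately have "bij_betw f' (insert a A) B" by simp
  moreover have "\<forall>x\<in>insert a A. h (f' x) = g x"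
    using f(2) eqA b(2) \<open>f' a = b\<close> by auto
  ultimately show ?case by blast
qed

lemma equiv_imp_nl:
  assumes g1: "good N1" and g2: "good N2"
  shows "node_equiv N1 N2 u v \<Longrightarrow> nested_label N1 u = nested_label N2 v"
proof (induction rule: node_equiv.induct)
  case (leaf u v)
  then show ?case using nl_leaf g1 g2 by metis
next
  case (inner u v f)
  have cv: "children N2 v \<noteq> {}" using inner.hyps(3,4) bij_betw_empty2 by metis
  have inj: "inj_on f (children N1 u)" and im: "f ` children N1 u = children N2 v"
    using inner.hyps(4) by (auto simp: bij_betw_def)
  have "image_mset (nested_label N2) (mset_set (children N2 v))
      = image_mset (nested_label N2) (image_mset f (mset_set (children N1 u)))"
    using image_mset_mset_set[OF inj] im by simp
  also have "\<dots> = image_mset (nested_label N1) (mset_set (children N1 u))"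
    unfolding multiset.map_comp
  proof (rule image_mset_cong)
    fix x assume "x \<in># mset_set (children N1 u)"
    then have "x \<in> children N1 u"
      by (metis elem_mset_set empty_iff mset_set.infinite set_mset_empty)
    then show "(nested_label N2 \<circ> f) x = nested_label N1 x" using inner.IH by auto
  qed
  finally show ?case
    using nl_inner[OF g1 inner.hyps(1,3)] nl_inner[OF g2 inner.hyps(2) cv] by simp
qed

lemma nl_imp_equiv:
  assumes g1: "good N1" and g2: "good N2"
  shows "u \<in> nodes N1 \<Longrightarrow> \<forall>v\<in>nodes N2. nested_label N1 u = nested_label N2 v \<longrightarrow> node_equiv N1 N2 u v"
proof (induction u rule: wf_induct[OF good_wf[OF g1]])
  case (1 u)
  note IH = 1(1) and un = 1(2)
  show ?case
  proof (intro ballI impI)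
    fix v assume v: "v \<in> nodes N2" and eq: "nested_label N1 u = nested_label N2 v"
    show "node_equiv N1 N2 u v"
    proof (cases "children N1 u = {}")
      case True
      then have ul: "u \<in> leaves N1" using un by (simp add: leaves_def)
      show ?thesis
      proof (cases "children N2 v = {}")
        case True
        then have vl: "v \<in> leaves N2" using v by (simp add: leaves_def)
        have "lbl N1 u = lbl N2 v" using eq unfolding nl_leaf[OF g1 ul] nl_leaf[OF g2 vl] by simp
        then show ?thesis by (rule node_equiv.leaf[OF ul vl])
      next
        case False
        then show ?thesis using eq unfolding nl_leaf[OF g1 ul] nl_inner[OF g2 v False] by simp
      qed
    next
      case False
      have cv: "children N2 v \<noteq> {}"
      proof
        assume "children N2 v = {}"
        then have "v \<in> leaves N2" using v by (simp add: leaves_def)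
        then show False using eq unfolding nl_leaf[OF g2 \<open>v \<in> leaves N2\<close>] nl_inner[OF g1 un False] by simp
      qed
      have "image_mset (nested_label N1) (mset_set (children N1 u))
          = image_mset (nested_label N2) (mset_set (children N2 v))"
        using eq unfolding nl_inner[OF g1 un False] nl_inner[OF g2 v cv] by simp
      from mset_match[OF children_fin[OF g1] children_fin[OF g2] this]
      obtain f where f: "bij_betw f (children N1 u) (children N2 v)"
        "\<forall>c\<in>children N1 u. nested_label N2 (f c) = nested_label N1 c"
        by (elim exE conjE)
      have "\<forall>c\<in>children N1 u. node_equiv N1 N2 c (f c)"
      proof
        fix c assume c: "c \<in> children N1 u"
        then have r: "(c, u) \<in> (arcs N1)\<inverse>" by (simp add: children_def)
        have cn: "c \<in> nodes N1" using c children_sub[OF g1] by (rule subsetD[rotated])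
        have "f c \<in> children N2 v" using f(1) c unfolding bij_betw_def by blast
        then have fcn: "f c \<in> nodes N2" using children_sub[OF g2] by (rule subsetD[rotated])
        have e: "nested_label N1 c = nested_label N2 (f c)" using f(2) c by simp
        have "\<forall>v\<in>nodes N2. nested_label N1 c = nested_label N2 v \<longrightarrow> node_equiv N1 N2 c v"
          using IH r cn by simp
        then show "node_equiv N1 N2 c (f c)" using fcn e by simp
      qed
      then show ?thesis by (rule node_equiv.inner[OF un v False f(1)])
    qed
  qed
qed

lemma equiv_iff:
  assumes g1: "good N1" and g2: "good N2" and u: "u \<in> nodes N1" and v: "v \<in> nodes N2"
  shows "node_equiv N1 N2 u v \<longleftrightarrow> nested_label N1 u = nested_label N2 v"
proof
  assume "node_equiv N1 N2 u v"
  then show "nested_label N1 u = nested_label N2 v" by (rule equiv_imp_nl[OF g1 g2])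
next
  assume eq: "nested_label N1 u = nested_label N2 v"
  show "node_equiv N1 N2 u v" using nl_imp_equiv[OF g1 g2 u] v eq by simp
qed

lemma equiv_nodes1: "node_equiv N1 N2 u v \<Longrightarrow> u \<in> nodes N1"
  by (induction rule: node_equiv.induct) (auto simp: leaves_def)

lemma equiv_nodes2: "node_equiv N1 N2 u v \<Longrightarrow> v \<in> nodes N2"
  by (induction rule: node_equiv.induct) (auto simp: leaves_def)

lemma count_Upsilon:
  assumes g: "good N"
  shows "count (Upsilon N) L = card {u \<in> nodes N. nested_label N u = L}"
proof -
  have fin: "finite (nodes N)" using g by (simp add: good_def)
  have "count (Upsilon N) L = (\<Sum>y\<in>nested_label N -` {L} \<inter> nodes N. 1)"
    unfolding Upsilon_def count_image_mset using fin by (intro sum.cong) auto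
  also have "\<dots> = card (nested_label N -` {L} \<inter> nodes N)" by simp
  also have "nested_label N -` {L} \<inter> nodes N = {u \<in> nodes N. nested_label N u = L}" by auto
  finally show ?thesis .
qed

lemma sum_delta:
  assumes "finite A" "U \<subseteq> A" "inj_on nl U" "nl ` A \<subseteq> nl ` U" "M = image_mset nl (mset_set A)"
    and "\<forall>v\<in>U. d v = count M (nl v) - count M' (nl v)"
  shows "(\<Sum>v\<in>U. d v) = size (M - M')"
proof -
  have sU: "set_mset M = nl ` U" using assms by auto
  have "(\<Sum>v\<in>U. d v) = (\<Sum>v\<in>U. count (M - M') (nl v))"
    using assms(6) by simp
  also have "\<dots> = (\<Sum>L\<in>nl ` U. count (M - M') L)"
    using sum.reindex[OF assms(3), of "count (M - M')"] by simp
  also have "\<dots> = (\<Sum>L\<in>set_mset (M - M'). count (M - M') L)"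
  proof (rule sum.mono_neutral_right)
    show "finite (nl ` U)" using assms finite_subset by blast
    show "set_mset (M - M') \<subseteq> nl ` U" using sU by (metis in_diffD subsetI)
    show "\<forall>i\<in>nl ` U - set_mset (M - M'). count (M - M') i = 0"
    proof
      fix i assume "i \<in> nl ` U - set_mset (M - M')"
      then have "i \<notin># M - M'" by blast
      then show "count (M - M') i = 0" by (rule not_in_iff[THEN iffD1])
    qed
  qed
  also have "\<dots> = size (M - M')" by (simp add: size_multiset_overloaded_eq)
  finally show ?thesis .
qed

lemma kappa_count: "good N \<Longrightarrow> v \<in> nodes N \<Longrightarrow> kappa N v = count (Upsilon N) (nested_label N v)"
  unfolding kappa_def count_Upsilon
  by (metis (no_types, lifting) equiv_iff Collect_cong)

lemma max_props:
  assumes g: "good N" and m: "max_noneq_set N U"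
  shows "U \<subseteq> nodes N" "inj_on (nested_label N) U"
    "nested_label N ` nodes N \<subseteq> nested_label N ` U"
proof -
  show U: "U \<subseteq> nodes N" using m by (simp add: max_noneq_set_def)
  show "inj_on (nested_label N) U"
  proof (rule inj_onI)
    fix x y assume "x \<in> U" "y \<in> U" "nested_label N x = nested_label N y"
    then show "x = y" using m U equiv_iff[OF g g] unfolding max_noneq_set_def by blast
  qed
  show "nested_label N ` nodes N \<subseteq> nested_label N ` U"
  proof
    fix L assume "L \<in> nested_label N ` nodes N"
    then obtain x where x: "x \<in> nodes N" "L = nested_label N x" by blast
    show "L \<in> nested_label N ` U"
    proof (cases "x \<in> U")
      case True then show ?thesis using x by blast
    next
      case False
      then obtain u where "u \<in> U" "node_equiv N N x u \<or> node_equiv N N u x"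
        using m x unfolding max_noneq_set_def by blast
      then show ?thesis using x U equiv_imp_nl[OF g g] by (metis image_eqI)
    qed
  qed
qed

lemma delta_eq:
  assumes g1: "good N1" and g2: "good N2" and m1: "max_noneq_set N1 U1" and m2: "max_noneq_set N2 U2"
  shows "(\<Sum>v\<in>U1. delta N1 N2 U2 v) = size (Upsilon N1 - Upsilon N2)"
proof (rule sum_delta)
  note p1 = max_props[OF g1 m1] and p2 = max_props[OF g2 m2]
  show "finite (nodes N1)" using g1 by (simp add: good_def)
  show "U1 \<subseteq> nodes N1" by (rule p1(1))
  show "inj_on (nested_label N1) U1" by (rule p1(2))
  show "nested_label N1 ` nodes N1 \<subseteq> nested_label N1 ` U1" by (rule p1(3))
  show "Upsilon N1 = image_mset (nested_label N1) (mset_set (nodes N1))" by (simp add: Upsilon_def)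
  show "\<forall>v\<in>U1. delta N1 N2 U2 v = count (Upsilon N1) (nested_label N1 v) - count (Upsilon N2) (nested_label N1 v)"
  proof
    fix v assume v: "v \<in> U1"
    then have vn: "v \<in> nodes N1" using p1(1) by blast
    show "delta N1 N2 U2 v = count (Upsilon N1) (nested_label N1 v) - count (Upsilon N2) (nested_label N1 v)"
    proof (cases "\<exists>v2\<in>U2. node_equiv N1 N2 v v2")
      case True
      define w where "w = (SOME v2. v2 \<in> U2 \<and> node_equiv N1 N2 v v2)"
      have w: "w \<in> U2 \<and> node_equiv N1 N2 v w"
        unfolding w_def
      proof (rule someI_ex)
        obtain v2 where "v2 \<in> U2" "node_equiv N1 N2 v v2" using True by (elim bexE)
        then show "\<exists>x. x \<in> U2 \<and> node_equiv N1 N2 v x" by (intro exI conjI)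
      qed
      have e: "nested_label N2 w = nested_label N1 v" using equiv_imp_nl[OF g1 g2 conjunct2[OF w]] by simp
      have wn: "w \<in> nodes N2" using w p2(1) by blast
      have d: "delta N1 N2 U2 v = kappa N1 v - kappa N2 w"
        unfolding delta_def w_def using True by simp
      show ?thesis unfolding d kappa_count[OF g1 vn] kappa_count[OF g2 wn] e by (rule refl)
    next
      case False
      have "count (Upsilon N2) (nested_label N1 v) = 0"
      proof (rule ccontr)
        assume "count (Upsilon N2) (nested_label N1 v) \<noteq> 0"
        then have "nested_label N1 v \<in># Upsilon N2" by (simp add: not_in_iff)
        moreover have "finite (nodes N2)" using g2 by (simp add: good_def)
        ultimately have "nested_label N1 v \<in> nested_label N2 ` nodes N2"
          by (simp add: Upsilon_def)
        then have "nested_label N1 v \<in> nested_label N2 ` U2" using p2(3) by (rule subsetD[rotated])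
        then obtain w where "w \<in> U2" "nested_label N2 w = nested_label N1 v" by (metis imageE)
        moreover then have "w \<in> nodes N2" using p2(1) by blast
        ultimately have "node_equiv N1 N2 v w" using equiv_iff[OF g1 g2 vn] by simp
        then show False using False \<open>w \<in> U2\<close> by (simp add: bex_simps)
      qed
      moreover have "delta N1 N2 U2 v = kappa N1 v" unfolding delta_def using False by simp
      ultimately show ?thesis using kappa_count[OF g1 vn] by simp
    qed
  qed
qed

theorem proposition3:
  fixes N1 :: "('a, 'l) network" and N2 :: "('b, 'l) network" and S :: "'l set"
    and U1 :: "'a set" and U2 :: "'b set"
  assumes "phylo_net S N1" and "phylo_net S N2"
    and "max_noneq_set N1 U1" and "max_noneq_set N2 U2"
  shows "nakhleh N1 N2 U1 U2 = real (size (msym_diff (Upsilon N1) (Upsilon N2))) / 2"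
proof -
  have g1: "good N1" by (rule phylo_good[OF assms(1)])
  have g2: "good N2" by (rule phylo_good[OF assms(2)])
  show ?thesis
    unfolding nakhleh_def msym_diff_def
    using delta_eq[OF g1 g2 assms(3,4)] delta_eq[OF g2 g1 assms(4,3)] by simp
qed

end
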